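(* Let $1\leqslant k\leqslant d$ and let $F\subseteq S^d$ be a $k$-neighborly family of strings of maximum possible size (i.e., no $k$-neighborly family in $S^d$ has more elements). Then every string in $F$ has at most $d-k$ jokers.
   Context: Let $S=\{0,1,\ast\}$ and let $S^d$ be the set of strings of length $d$ over $S$; the symbol $\ast$ is called a joker. For $x,y\in S^d$, $d(x,y)$ is the number of positions $i\in[d]$ such that one of $x_i,y_i$ equals $0$ and the other equals $1$. A family $F\subseteq S^d$ is $k$-neighborly if $1\leqslant d(x,y)\leqslant k$ for all distinct $x,y\in F$. *)

theory Defs
  imports Main
begin

datatype sym = Zero | One | Joker

text \<open>Strings of length d over S = {0,1,*}, represented as lists.\<close>
definition strings :: "nat \<Rightarrow> sym list set" where
  "strings d = {x. length x = d}"

definition dist :: "sym list \<Rightarrow> sym list \<Rightarrow> nat" where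
  "dist x y = card {i. i < length x \<and> i < length y \<and>
      ((x ! i = Zero \<and> y ! i = One) \<or> (x ! i = One \<and> y ! i = Zero))}"

definition neighborly :: "nat \<Rightarrow> nat \<Rightarrow> sym list set \<Rightarrow> bool" where
  "neighborly d k F \<longleftrightarrow> F \<subseteq> strings d \<and>
     (\<forall>x\<in>F. \<forall>y\<in>F. x \<noteq> y \<longrightarrow> 1 \<le> dist x y \<and> dist x y \<le> k)"

definition jokers :: "sym list \<Rightarrow> nat" where
  "jokers x = card {i. i < length x \<and> x ! i = Joker}"

end

theory Submission
  imports Defs
begin

lemma dist_sym: "dist x y = dist y x"
  unfolding dist_def by (rule arg_cong[where f=card]) auto

lemma dist_le_nonjoker:
  assumes "length x = d" "length y = d"
  shows "dist x y \<le> d - jokers x"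
proof -
  have fin: "finite {i. i < d \<and> x ! i \<noteq> Joker}" by simp
  have u: "{i. i < d \<and> x ! i = Joker} \<union> {i. i < d \<and> x ! i \<noteq> Joker} = {..<d}" by auto
  have "card ({i. i < d \<and> x ! i = Joker} \<union> {i. i < d \<and> x ! i \<noteq> Joker}) = card {i. i < d \<and> x ! i = Joker} + card {i. i < d \<and> x ! i \<noteq> Joker}"
    by (rule card_Un_disjoint) auto
  hence "card {i. i < d \<and> x ! i = Joker} + card {i. i < d \<and> x ! i \<noteq> Joker} = d"
    using u by simp
  hence c: "card {i. i < d \<and> x ! i \<noteq> Joker} = d - jokers x"
    unfolding jokers_def using assms by simp
  have "dist x y \<le> card {i. i < d \<and> x ! i \<noteq> Joker}"
    unfolding dist_def using assms by (intro card_mono[OF fin]) auto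
  thus ?thesis using c by simp
qed

lemma dist_upd_le:
  assumes "i < length x"
  shows "dist (x[i:=a]) y \<le> dist x y + 1"
proof -
  let ?A = "{j. j < length x \<and> j < length y \<and>
      ((x ! j = Zero \<and> y ! j = One) \<or> (x ! j = One \<and> y ! j = Zero))}"
  have "dist (x[i:=a]) y \<le> card (insert i ?A)"
    unfolding dist_def using assms
    by (intro card_mono) (auto simp: nth_list_update)
  also have "\<dots> \<le> card ?A + 1" by (simp add: card_insert_le_m1)
  finally show ?thesis unfolding dist_def .
qed

lemma dist_upd_ge:
  assumes "i < length x" "x ! i = Joker"
  shows "dist x y \<le> dist (x[i:=a]) y"
  unfolding dist_def using assms
  by (intro card_mono) (auto simp: nth_list_update)

lemma dist_01:
  assumes "i < length x"
  shows "dist (x[i:=Zero]) (x[i:=One]) = 1"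
proof -
  have "{j. j < length (x[i:=Zero]) \<and> j < length (x[i:=One]) \<and>
      ((x[i:=Zero] ! j = Zero \<and> x[i:=One] ! j = One) \<or> (x[i:=Zero] ! j = One \<and> x[i:=One] ! j = Zero))} = {i}"
    using assms by (auto simp: nth_list_update split: if_splits)
  thus ?thesis unfolding dist_def by simp
qed

lemma dist_self_upd:
  assumes "i < length x" "x ! i = Joker"
  shows "dist x (x[i:=a]) = 0"
proof -
  have "{j. j < length x \<and> j < length (x[i:=a]) \<and>
      ((x ! j = Zero \<and> x[i:=a] ! j = One) \<or> (x ! j = One \<and> x[i:=a] ! j = Zero))} = {}"
    using assms by (auto simp: nth_list_update split: if_splits)
  thus ?thesis unfolding dist_def by simp
qed

lemma finite_strings: "finite (strings d)"
proof -
  have "UNIV = {Zero, One, Joker}" using sym.exhaust by blast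
  hence fin: "finite (UNIV :: sym set)" by (metis finite.emptyI finite.insertI)
  have "strings d = {xs. set xs \<subseteq> UNIV \<and> length xs = d}" unfolding strings_def by simp
  thus ?thesis using finite_lists_length_eq[OF fin, of d] by simp
qed

theorem lemma1:
  fixes d k :: nat and F :: "sym list set"
  assumes "1 \<le> k" and "k \<le> d"
    and "neighborly d k F"
    and "\<forall>G. neighborly d k G \<longrightarrow> card G \<le> card F"
  shows "\<forall>x\<in>F. jokers x \<le> d - k"
proof (rule ccontr)
  assume "\<not> (\<forall>x\<in>F. jokers x \<le> d - k)"
  then obtain x where xF: "x \<in> F" and jx: "jokers x > d - k" by auto
  have Fs: "F \<subseteq> strings d" and Fn: "\<forall>x\<in>F. \<forall>y\<in>F. x \<noteq> y \<longrightarrow> 1 \<le> dist x y \<and> dist x y \<le> k"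
    using assms(3) unfolding neighborly_def by auto
  have finF: "finite F" using Fs finite_strings finite_subset by blast
  have lx: "length x = d" using Fs xF unfolding strings_def by auto
  have "{i. i < length x \<and> x ! i = Joker} \<noteq> {}" using jx unfolding jokers_def by (metis card.empty less_nat_zero_code)
  then obtain i where il: "i < d" and xi: "x ! i = Joker" using lx by auto
  have il': "i < length x" using il lx by simp
  define x0 where "x0 = x[i:=Zero]"
  define x1 where "x1 = x[i:=One]"
  have l0: "length x0 = d" and l1: "length x1 = d" using lx by (auto simp: x0_def x1_def)
  have d01: "dist x0 x1 = 1" unfolding x0_def x1_def using dist_01 il lx by simp
  have bnd: "dist x y \<le> k - 1" if "y \<in> F" for y
  proof -
    have "length y = d" using Fs that unfolding strings_def by auto
    hence "dist x y \<le> d - jokers x" using dist_le_nonjoker lx by blast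
    thus ?thesis using jx assms(1,2) by linarith
  qed
  have good: "1 \<le> dist z y \<and> dist z y \<le> k" if zz: "z = x0 \<or> z = x1" and yy: "y \<in> F" "y \<noteq> x" for z y
  proof -
    obtain a where z: "z = x[i:=a]" using zz unfolding x0_def x1_def by blast
    have "1 \<le> dist x y" using Fn xF yy(1) yy(2)[symmetric] by blast
    moreover have "dist x y \<le> dist z y" using dist_upd_ge il lx xi z by simp
    moreover have "dist z y \<le> dist x y + 1" using dist_upd_le il lx z by simp
    ultimately show ?thesis using bnd[OF yy(1)] assms(1) by linarith
  qed
  have notin: "z \<notin> F - {x}" if zz: "z = x0 \<or> z = x1" for z
  proof
    assume zF: "z \<in> F - {x}"
    obtain a where z: "z = x[i:=a]" using zz unfolding x0_def x1_def by blast
    have "x \<noteq> z" using zF by blast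
    hence "1 \<le> dist x z" using Fn xF zF by blast
    thus False using dist_self_upd[OF il' xi, of a] z by simp
  qed
  have x01: "x0 \<noteq> x1" proof
    assume "x0 = x1"
    hence "x0 ! i = x1 ! i" by simp
    thus False using il' by (simp add: x0_def x1_def)
  qed
  define G where "G = insert x0 (insert x1 (F - {x}))"
  have "neighborly d k G"
    unfolding neighborly_def
  proof
    show "G \<subseteq> strings d" using Fs l0 l1 unfolding G_def strings_def by auto
    show "\<forall>u\<in>G. \<forall>v\<in>G. u \<noteq> v \<longrightarrow> 1 \<le> dist u v \<and> dist u v \<le> k"
    proof (intro ballI impI)
      fix u v assume u: "u \<in> G" and v: "v \<in> G" and uv: "u \<noteq> v"
      show "1 \<le> dist u v \<and> dist u v \<le> k"
      proof (cases "u = x0 \<or> u = x1")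
        case True
        show ?thesis
        proof (cases "v = x0 \<or> v = x1")
          case True
          then show ?thesis using \<open>u = x0 \<or> u = x1\<close> uv d01 dist_sym[of x0 x1] assms(1) by auto
        next
          case False
          hence "v \<in> F" "v \<noteq> x" using v unfolding G_def by auto
          then show ?thesis using good[OF \<open>u = x0 \<or> u = x1\<close>] by blast
        qed
      next
        case False
        show ?thesis
        proof (cases "v = x0 \<or> v = x1")
          case True
          have "u \<in> F" "u \<noteq> x" using u False unfolding G_def by auto
          then show ?thesis using good[OF True] dist_sym[of u v] by metis
        next
          case False
          hence "v \<in> F" using v unfolding G_def by auto
          moreover have "u \<in> F" using \<open>\<not> (u = x0 \<or> u = x1)\<close> u unfolding G_def by auto
          ultimately show ?thesis using uv Fn by blast
        qed
      qed
    qed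
  qed
  hence "card G \<le> card F" using assms(4) by blast
  moreover have "card G = card F + 1"
  proof -
    have "card (F - {x}) = card F - 1" using xF finF by simp
    moreover have "card F \<ge> 1" using xF finF card_0_eq by fastforce
    ultimately show ?thesis unfolding G_def using notin x01 finF by simp
  qed
  ultimately show False by simp
qed

end
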